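(* Let $m, n, k, l, t, r$ be positive integers such that $t\geq 2$, $k\geq l \geq t+r$ and $\min\{m, n\}\geq k+l-t+2$. Let $i,j\in [\max \{ m, n\}]$ with $i<j$. Let $\mathcal{A}\subseteq\binom{[n]}{k}$ and $\mathcal{B}\subseteq\binom{[m]}{l}$ be cross-$t$-intersecting families. Suppose there exists a $(t+2r)$-element subset $T\subset [\min\{m, n\}]$ such that \[S_{ij}(\mathcal{A})=\left\{A \in \binom{[n]}{k} : |A \cap T| \geq t+r \right\}\quad\text{and}\quad S_{ij}(\mathcal{B})=\left\{B \in \binom{[m]}{l} : |B \cap T| \geq t+r \right\}.\] Then there is a $(t+2r)$-element subset $T'\subset [\min\{m, n\}]$ such that \[\mathcal{A}=\left\{A \in \binom{[n]}{k} : |A \cap T'| \geq t+r \right\}\quad\text{and}\quad\mathcal{B}=\left\{B \in \binom{[m]}{l} : |B \cap T'| \geq t+r \right\}.\]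
   Context: $[n]=\{1,\dots,n\}$ and $\binom{D}{k}$ denotes the family of all $k$-element subsets of a finite set $D$. Families $\mathcal{A},\mathcal{B}$ are cross-$t$-intersecting if $|A\cap B|\ge t$ for all $A\in\mathcal{A}$, $B\in\mathcal{B}$. For a family $\mathcal{F}$ of sets and indices $i,j$, the shift operation is defined for $F\in\mathcal{F}$ by $S_{ij}(F)=(F\setminus\{j\})\cup\{i\}$ if $j\in F$, $i\notin F$ and $(F\setminus\{j\})\cup\{i\}\notin\mathcal{F}$, and $S_{ij}(F)=F$ otherwise; and $S_{ij}(\mathcal{F})=\{S_{ij}(F):F\in\mathcal{F}\}$. *)

theory Defs
  imports Main
begin

definition k_subsets :: "'a set \<Rightarrow> nat \<Rightarrow> 'a set set" where
  "k_subsets D k = {A. A \<subseteq> D \<and> card A = k}"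

definition cross_t_intersecting :: "'a set set \<Rightarrow> 'a set set \<Rightarrow> nat \<Rightarrow> bool" where
  "cross_t_intersecting \<A> \<B> t \<longleftrightarrow> (\<forall>A\<in>\<A>. \<forall>B\<in>\<B>. card (A \<inter> B) \<ge> t)"

definition shift_set :: "'a \<Rightarrow> 'a \<Rightarrow> 'a set set \<Rightarrow> 'a set \<Rightarrow> 'a set" where
  "shift_set i j \<F> F =
     (if j \<in> F \<and> i \<notin> F \<and> (F - {j}) \<union> {i} \<notin> \<F> then (F - {j}) \<union> {i} else F)"

definition shift :: "'a \<Rightarrow> 'a \<Rightarrow> 'a set set \<Rightarrow> 'a set set" where
  "shift i j \<F> = shift_set i j \<F> ` \<F>"

end

theory Submission
  imports Defs
begin

definition bd :: "nat \<Rightarrow> nat \<Rightarrow> nat \<Rightarrow> nat \<Rightarrow> nat set \<Rightarrow> nat \<Rightarrow> nat set \<Rightarrow> bool" where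
  "bd M L i j T s C \<longleftrightarrow> C \<subseteq> {1..M} - {i,j} \<and> card C = L - 1 \<and> card (C \<inter> T) = s"

lemma shift_mem_same:
  assumes "i \<noteq> j" "(i \<in> H) = (j \<in> H)"
  shows "H \<in> shift i j F \<longleftrightarrow> H \<in> F"
  using assms unfolding shift_def shift_set_def by (auto simp: image_iff)

lemma shift_mem_i:
  assumes "i \<noteq> j" "i \<in> H" "j \<notin> H"
  shows "H \<in> shift i j F \<longleftrightarrow> (H \<in> F \<or> H - {i} \<union> {j} \<in> F)"
proof
  assume "H \<in> shift i j F"
  then obtain G where G: "G \<in> F" "shift_set i j F G = H" unfolding shift_def by auto
  show "H \<in> F \<or> H - {i} \<union> {j} \<in> F"
  proof (cases "j \<in> G \<and> i \<notin> G \<and> (G - {j}) \<union> {i} \<notin> F")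
    case True
    then have "H = G - {j} \<union> {i}" using G unfolding shift_set_def by auto
    then have "G = H - {i} \<union> {j}" using True by auto
    then show ?thesis using G by auto
  next
    case False
    then show ?thesis using G unfolding shift_set_def by auto
  qed
next
  assume a: "H \<in> F \<or> H - {i} \<union> {j} \<in> F"
  show "H \<in> shift i j F"
  proof (cases "H \<in> F")
    case True
    then have "shift_set i j F H = H" using assms unfolding shift_set_def by auto
    then show ?thesis using True unfolding shift_def by force
  next
    case False
    let ?G = "H - {i} \<union> {j}"
    have e: "?G - {j} \<union> {i} = H" using assms by auto
    have "shift_set i j F ?G = H" using assms False e unfolding shift_set_def by auto
    then show ?thesis using a False unfolding shift_def by force
  qed
qed

lemma shift_mem_j:
  assumes "i \<noteq> j" "j \<in> H" "i \<notin> H"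
  shows "H \<in> shift i j F \<longleftrightarrow> (H \<in> F \<and> H - {j} \<union> {i} \<in> F)"
proof
  assume "H \<in> shift i j F"
  then obtain G where G: "G \<in> F" "shift_set i j F G = H" unfolding shift_def by auto
  show "H \<in> F \<and> H - {j} \<union> {i} \<in> F"
  proof (cases "j \<in> G \<and> i \<notin> G \<and> (G - {j}) \<union> {i} \<notin> F")
    case True
    then have "H = G - {j} \<union> {i}" using G unfolding shift_set_def by auto
    then show ?thesis using assms by auto
  next
    case False
    then have "G = H" using G unfolding shift_set_def by auto
    then show ?thesis using G False assms by auto
  qed
next
  assume a: "H \<in> F \<and> H - {j} \<union> {i} \<in> F"
  then have "shift_set i j F H = H" unfolding shift_set_def by auto
  then show "H \<in> shift i j F" using a unfolding shift_def by force
qed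

lemma card_swap: "finite G \<Longrightarrow> x \<in> G \<Longrightarrow> y \<notin> G \<Longrightarrow> card (G - {x} \<union> {y}) = card G"
proof -
  assume a: "finite G" "x \<in> G" "y \<notin> G"
  have c1: "card (G - {x} \<union> {y}) = Suc (card (G - {x}))" using a by simp
  have "card G > 0" using a card_gt_0_iff by blast
  then have "Suc (card (G - {x})) = card G" using a by (simp add: card_Diff_singleton)
  then show ?thesis using c1 by simp
qed

lemma bd_fin: "bd M L i j T s C \<Longrightarrow> finite C"
proof -
  assume "bd M L i j T s C"
  then have "C \<subseteq> {1..M}" unfolding bd_def by auto
  then show ?thesis by (rule finite_subset) simp
qed

lemma mkD:
  assumes "finite T" "i \<in> T" "j \<notin> T" "T \<subseteq> {1..N}" "N \<le> M" "card T = t + 2*r"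
    "W \<subseteq> T - {i}" "r \<le> card W" "L \<ge> t + r" "t \<ge> 1"
    "L - (t + r) \<le> card ({1..N} - T - {j} - E)"
  obtains D where "bd M L i j T (t+r-1) D" "D - T \<subseteq> {1..N} - T - {j} - E"
    "\<forall>C. finite C \<longrightarrow> C \<inter> T \<subseteq> T - {i} \<longrightarrow> card (C \<inter> T) = t+r-1 \<longrightarrow> W \<subseteq> C \<longrightarrow> C - T \<subseteq> E \<longrightarrow> card (C \<inter> D) < t"
proof -
  obtain R where R: "R \<subseteq> W" "card R = r" "finite R"
    using obtain_subset_with_card_n[OF assms(8)] by blast
  obtain P where P: "P \<subseteq> {1..N} - T - {j} - E" "card P = L - (t+r)" "finite P"
    using obtain_subset_with_card_n[OF assms(11)] by blast
  define D where "D = (T - {i} - R) \<union> P"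
  have RT: "R \<subseteq> T - {i}" using R assms(7) by auto
  have c1: "card (T - {i} - R) = t + r - 1"
  proof -
    have "card (T - {i} - R) = card (T - {i}) - card R"
      using RT R(3) by (simp add: card_Diff_subset)
    also have "card (T - {i}) = t + 2*r - 1" using assms by simp
    finally show ?thesis using R(2) by simp
  qed
  have DT: "D \<inter> T = T - {i} - R" using P(1) unfolding D_def by auto
  have disj: "(T - {i} - R) \<inter> P = {}" using P(1) by auto
  have cD: "card D = L - 1"
    unfolding D_def using card_Un_disjoint[OF _ P(3) disj] assms(1) c1 P(2) assms(9) assms(10)
    by simp
  have sub: "D \<subseteq> {1..M} - {i,j}" using assms(2,3,4,5) P(1) unfolding D_def by auto
  have "bd M L i j T (t+r-1) D" unfolding bd_def using sub cD DT c1 by simp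
  moreover have "D - T \<subseteq> {1..N} - T - {j} - E" using P(1) unfolding D_def by auto
  moreover have "card (C \<inter> D) < t" if C: "finite C" "C \<inter> T \<subseteq> T - {i}" "card (C \<inter> T) = t+r-1"
      "W \<subseteq> C" "C - T \<subseteq> E" for C
  proof -
    have "C \<inter> D = C \<inter> T - R" using C P(1) RT unfolding D_def by auto
    moreover have "R \<subseteq> C \<inter> T" using R(1) C(4) RT by auto
    ultimately have "card (C \<inter> D) = card (C \<inter> T) - card R"
      using R(3) by (simp add: card_Diff_subset)
    then show ?thesis using C(3) R(2) assms(10) by simp
  qed
  ultimately show ?thesis using that by blast
qed


lemma compat:
  assumes "\<forall>X\<in>A. \<forall>Y\<in>B. t \<le> card (X \<inter> Y)" "i \<noteq> j"
    "i \<notin> C" "j \<notin> C" "i \<notin> D" "j \<notin> D"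
    "card (C \<inter> D) < t"
    "insert i C \<in> A \<longleftrightarrow> insert j C \<notin> A" "insert i D \<in> B \<longleftrightarrow> insert j D \<notin> B"
  shows "insert i C \<in> A \<longleftrightarrow> insert i D \<in> B"
proof -
  have e1: "insert i C \<inter> insert j D = C \<inter> D" using assms(2-6) by auto
  have e2: "insert j C \<inter> insert i D = C \<inter> D" using assms(2-6) by auto
  show ?thesis using assms(1,7,8,9) e1 e2 by (metis not_less)
qed

lemma two_diff:
  assumes "finite X" "finite Y" "card X = card Y" "X \<noteq> Y"
  obtains x y where "x \<in> X" "x \<notin> Y" "y \<in> Y" "y \<notin> X"
proof -
  have "\<not> X \<subseteq> Y" using assms card_subset_eq by blast
  moreover have "\<not> Y \<subseteq> X" using assms card_subset_eq by metis
  ultimately show ?thesis using that by blast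
qed

lemma const:
  assumes fT: "finite T" and iT: "i \<in> T" and jT: "j \<notin> T" and TN: "T \<subseteq> {1..N}"
    and Nm: "N \<le> m" and Nn: "N \<le> n" and cT: "card T = t + 2*r" and t2: "t \<ge> 2"
    and kk: "k \<ge> t + r" and ll: "l \<ge> t + r" and NN: "k + l + 2 \<le> N + t" and ij: "i \<noteq> j"
    and cross: "\<forall>X\<in>A. \<forall>Y\<in>B. t \<le> card (X \<inter> Y)"
    and xorA: "\<forall>C. bd n k i j T (t+r-1) C \<longrightarrow> (insert i C \<in> A \<longleftrightarrow> insert j C \<notin> A)"
    and xorB: "\<forall>D. bd m l i j T (t+r-1) D \<longrightarrow> (insert i D \<in> B \<longleftrightarrow> insert j D \<notin> B)"
  shows "bd n k i j T (t+r-1) C \<Longrightarrow> bd n k i j T (t+r-1) C' \<Longrightarrow>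
         (insert i C \<in> A) = (insert i C' \<in> A)"
proof -
  have step: "(insert i C \<in> A) = (insert i (insert y (C - {x})) \<in> A)"
    if C: "bd n k i j T (t+r-1) C" and C2: "bd n k i j T (t+r-1) (insert y (C - {x}))"
      and x: "x \<in> C" and y: "y \<notin> C" for C x y
  proof -
    let ?C2 = "insert y (C - {x})"
    have t1: "1 \<le> t" using t2 by simp
    let ?W = "C \<inter> ?C2 \<inter> T"
    let ?E = "C \<union> ?C2"
    have fC: "finite C" using bd_fin[OF C] .
    have iC: "i \<notin> C" "j \<notin> C" using C unfolding bd_def by auto
    have iC2: "i \<notin> ?C2" "j \<notin> ?C2" using C2 unfolding bd_def by auto
    have ctC: "card (C \<inter> T) = t + r - 1" using C unfolding bd_def by auto
    have ctC2: "card (?C2 \<inter> T) = t + r - 1" using C2 unfolding bd_def by auto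
    have cC: "card C = k - 1" using C unfolding bd_def by auto
    have W1: "?W \<subseteq> T - {i}" using iC by auto
    have W2: "r \<le> card ?W"
    proof -
      have "C \<inter> T - {x} \<subseteq> ?W" by auto
      moreover have "card (C \<inter> T - {x}) \<ge> t + r - 2"
        using ctC fC by (simp add: card_Diff_singleton_if) arith
      ultimately have "card ?W \<ge> t + r - 2" using fC
        by (meson card_mono finite_Int le_trans)
      then show ?thesis using t2 by linarith
    qed
    have E: "l - (t + r) \<le> card ({1..N} - T - {j} - ?E)"
    proof -
      have sub: "{1..N} - (T \<union> (C - T) \<union> {j, y}) \<subseteq> {1..N} - T - {j} - ?E" by auto
      have cCT: "card (C - T) = k - t - r"
      proof -
        have "card (C - T) = card C - card (C \<inter> T)"
          using fC by (simp add: card_Diff_subset_Int)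
        then show ?thesis using cC ctC kk t2 by simp
      qed
      have c2: "card {j, y} \<le> 2" by (simp add: card_insert_if)
      have "card (T \<union> (C - T) \<union> {j, y}) \<le> card (T \<union> (C - T)) + card {j, y}"
        by (rule card_Un_le)
      moreover have "card (T \<union> (C - T)) \<le> card T + card (C - T)" by (rule card_Un_le)
      ultimately have "card (T \<union> (C - T) \<union> {j, y}) \<le> card T + card (C - T) + 2"
        using c2 by linarith
      then have "card (T \<union> (C - T) \<union> {j, y}) \<le> k + r + 2" using cT cCT kk by linarith
      then have "N - (k + r + 2) \<le> card ({1..N} - (T \<union> (C - T) \<union> {j, y}))"
        using diff_card_le_card_Diff[of "T \<union> (C - T) \<union> {j, y}" "{1..N}"] fT fC by simp
      then have "N - (k + r + 2) \<le> card ({1..N} - T - {j} - ?E)"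
        using card_mono[OF _ sub] by (meson finite_Diff finite_atLeastAtMost le_trans)
      then show ?thesis using NN by linarith
    qed
    obtain D where D: "bd m l i j T (t+r-1) D"
      "\<forall>C. finite C \<longrightarrow> C \<inter> T \<subseteq> T - {i} \<longrightarrow> card (C \<inter> T) = t+r-1 \<longrightarrow> ?W \<subseteq> C \<longrightarrow> C - T \<subseteq> ?E \<longrightarrow> card (C \<inter> D) < t"
    proof -
      from mkD[OF fT iT jT TN Nm cT W1 W2 ll t1 E] obtain D0 where
        "bd m l i j T (t+r-1) D0"
        "\<forall>C. finite C \<longrightarrow> C \<inter> T \<subseteq> T - {i} \<longrightarrow> card (C \<inter> T) = t+r-1 \<longrightarrow> ?W \<subseteq> C \<longrightarrow> C - T \<subseteq> ?E \<longrightarrow> card (C \<inter> D0) < t"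
        .
      then show ?thesis using that by blast
    qed
    have d1: "card (C \<inter> D) < t"
    proof (rule D(2)[rule_format])
      show "finite C" by (rule fC)
      show "C \<inter> T \<subseteq> T - {i}" using iC by blast
      show "card (C \<inter> T) = t + r - 1" by (rule ctC)
      show "?W \<subseteq> C" by blast
      show "C - T \<subseteq> ?E" by blast
    qed
    have d2: "card (?C2 \<inter> D) < t"
    proof (rule D(2)[rule_format])
      show "finite ?C2" using fC by simp
      show "?C2 \<inter> T \<subseteq> T - {i}" using iC2 by blast
      show "card (?C2 \<inter> T) = t + r - 1" by (rule ctC2)
      show "?W \<subseteq> ?C2" by blast
      show "?C2 - T \<subseteq> ?E" by blast
    qed
    have iD: "i \<notin> D" "j \<notin> D" using D(1) unfolding bd_def by auto
    have "insert i C \<in> A \<longleftrightarrow> insert i D \<in> B"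
      by (rule compat[OF cross ij iC iD d1]) (use xorA xorB C D(1) in auto)
    moreover have "insert i ?C2 \<in> A \<longleftrightarrow> insert i D \<in> B"
      by (rule compat[OF cross ij iC2 iD d2]) (use xorA xorB C2 D(1) in auto)
    ultimately show ?thesis by simp
  qed
  show "bd n k i j T (t+r-1) C \<Longrightarrow> bd n k i j T (t+r-1) C' \<Longrightarrow>
         (insert i C \<in> A) = (insert i C' \<in> A)"
  proof (induction "card (C - C')" arbitrary: C)
    case 0
    have fC: "finite C" using bd_fin[OF 0(2)] .
    have fC': "finite C'" using bd_fin[OF 0(3)] .
    have "C \<subseteq> C'" using 0(1) fC by simp
    moreover have "card C = card C'" using 0(2,3) unfolding bd_def by simp
    ultimately have "C = C'" using fC' card_subset_eq by blast
    then show ?case by simp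
  next
    case (Suc d C)
    have bC: "bd n k i j T (t+r-1) C" and bC': "bd n k i j T (t+r-1) C'" using Suc.prems by auto
    have fC: "finite C" using bd_fin[OF bC] .
    have fC': "finite C'" using bd_fin[OF bC'] .
    have ne: "C \<noteq> C'" using Suc.hyps(2) by (metis Diff_cancel card.empty nat.simps(3))
    obtain x y where xy: "x \<in> C" "x \<notin> C'" "y \<in> C'" "y \<notin> C" "(x \<in> T) = (y \<in> T)"
    proof (cases "C \<inter> T = C' \<inter> T")
      case True
      have "C - T \<noteq> C' - T" using True ne by blast
      moreover have "card (C - T) = card (C' - T)"
      proof -
        have "card (C - T) = card C - card (C \<inter> T)" using fC by (simp add: card_Diff_subset_Int)
        moreover have "card (C' - T) = card C' - card (C' \<inter> T)" using fC' by (simp add: card_Diff_subset_Int)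
        ultimately show ?thesis using bC bC' unfolding bd_def by simp
      qed
      ultimately obtain x y where "x \<in> C - T" "x \<notin> C' - T" "y \<in> C' - T" "y \<notin> C - T"
        using two_diff[of "C - T" "C' - T"] fC fC' by blast
      then show ?thesis using that by blast
    next
      case False
      moreover have "card (C \<inter> T) = card (C' \<inter> T)" using bC bC' unfolding bd_def by simp
      ultimately obtain x y where "x \<in> C \<inter> T" "x \<notin> C' \<inter> T" "y \<in> C' \<inter> T" "y \<notin> C \<inter> T"
        using two_diff[of "C \<inter> T" "C' \<inter> T"] fC fC' by blast
      then show ?thesis using that by blast
    qed
    let ?C2 = "insert y (C - {x})"
    have b2: "bd n k i j T (t+r-1) ?C2"
    proof -
      have "?C2 \<subseteq> {1..n} - {i,j}" using bC bC' xy unfolding bd_def by auto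
      moreover have "card ?C2 = card C" using card_swap[OF fC xy(1) xy(4)] by simp
      moreover have "card (?C2 \<inter> T) = card (C \<inter> T)"
      proof (cases "x \<in> T")
        case True
        then have eqs1: "?C2 \<inter> T = C \<inter> T - {x} \<union> {y}" using xy by auto
        show ?thesis unfolding eqs1 using card_swap[of "C \<inter> T" x y] xy fC True by simp
      next
        case False
        then have eqs2: "?C2 \<inter> T = C \<inter> T" using xy by auto
        show ?thesis unfolding eqs2 by simp
      qed
      ultimately show ?thesis using bC unfolding bd_def by simp
    qed
    have "?C2 - C' = C - C' - {x}" using xy by auto
    then have "d = card (?C2 - C')" using Suc.hyps(2) xy fC by (simp add: card_Diff_singleton_if)
    then have "(insert i ?C2 \<in> A) = (insert i C' \<in> A)" using Suc.hyps(1) b2 bC' by blast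
    moreover have "(insert i C \<in> A) = (insert i ?C2 \<in> A)" using step[OF bC b2 xy(1,4)] .
    ultimately show ?case by simp
  qed
qed


lemma ks_finite: "G \<in> k_subsets {1..(M::nat)} L \<Longrightarrow> finite G"
proof -
  assume "G \<in> k_subsets {1..(M::nat)} L"
  then have "G \<subseteq> {1..M}" unfolding k_subsets_def by simp
  then show ?thesis by (rule finite_subset) simp
qed

lemma famI:
  fixes A :: "nat set set"
  assumes AK: "A \<subseteq> k_subsets {1..M} L"
    and S: "shift i j A = {G \<in> k_subsets {1..M} L. t + r \<le> card (G \<inter> T)}"
    and iT: "i \<in> T" and jT: "j \<notin> T" and fT: "finite T" and iM: "i \<in> {1..M}" and ij: "i \<noteq> j"
    and tr: "t + r \<ge> 1"
    and xor: "\<forall>C. bd M L i j T (t+r-1) C \<longrightarrow> (insert i C \<in> A \<longleftrightarrow> insert j C \<notin> A)"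
    and allI: "\<forall>C. bd M L i j T (t+r-1) C \<longrightarrow> insert i C \<in> A"
  shows "A = {G \<in> k_subsets {1..M} L. t + r \<le> card (G \<inter> T)}"
proof (rule set_eqI)
  fix G
  let ?K = "k_subsets {1..M} L"
  show "G \<in> A \<longleftrightarrow> G \<in> {G \<in> ?K. t + r \<le> card (G \<inter> T)}"
  proof (cases "G \<in> ?K")
    case False
    then show ?thesis using AK by auto
  next
    case GK: True
    have fG: "finite G" using ks_finite[OF GK] .
    have GM: "G \<subseteq> {1..M}" "card G = L" using GK unfolding k_subsets_def by auto
    consider "(i \<in> G) = (j \<in> G)" | "i \<in> G" "j \<notin> G" | "j \<in> G" "i \<notin> G" by blast
    then show ?thesis
    proof cases
      case 1
      then show ?thesis using shift_mem_same[OF ij 1, of A] S GK by auto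
    next
      case 2
      let ?G' = "G - {i} \<union> {j}"
      have sG: "G \<in> shift i j A \<longleftrightarrow> (G \<in> A \<or> ?G' \<in> A)" using shift_mem_i[OF ij 2] .
      show ?thesis
      proof (cases "j \<in> {1..M}")
        case False
        then have "?G' \<notin> A" using AK unfolding k_subsets_def by auto
        then show ?thesis using sG S GK by auto
      next
        case jM: True
        have G'K: "?G' \<in> ?K"
        proof -
          have "?G' \<subseteq> {1..M}" using GM(1) jM by auto
          moreover have "card (?G') = L" by (rule trans[OF card_swap[OF fG 2(1) 2(2)] GM(2)])
          ultimately show ?thesis unfolding k_subsets_def by blast
        qed
        have cG': "card (?G' \<inter> T) = card (G \<inter> T) - 1"
        proof -
          have eqs3: "?G' \<inter> T = G \<inter> T - {i}" using jT by auto
          show ?thesis unfolding eqs3 using 2 iT fG by (simp add: card_Diff_singleton_if)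
        qed
        have sG': "?G' \<in> shift i j A \<longleftrightarrow> (?G' \<in> A \<and> ?G' - {j} \<union> {i} \<in> A)"
          by (rule shift_mem_j) (use ij 2 in auto)
        have bk: "?G' - {j} \<union> {i} = G" using 2 by auto
        consider "card (G \<inter> T) = t + r" | "card (G \<inter> T) > t + r" | "card (G \<inter> T) < t + r" by linarith
        then show ?thesis
        proof cases
          case 1
          have "bd M L i j T (t+r-1) (G - {i})"
          proof -
            have "(G - {i}) \<inter> T = G \<inter> T - {i}" by auto
            then have "card ((G - {i}) \<inter> T) = t + r - 1" using 1 2 iT fG by (simp add: card_Diff_singleton_if)
            moreover have "G - {i} \<subseteq> {1..M} - {i,j}" using GM 2 by auto
            moreover have "card (G - {i}) = L - 1" using GM 2 fG by simp
            ultimately show ?thesis unfolding bd_def by blast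
          qed
          then have "insert i (G - {i}) \<in> A" using allI by blast
          then show ?thesis using 2 1 GK by (simp add: insert_absorb)
        next
          case 3
          then show ?thesis using sG S GK by auto
        next
          case c: 2
          then have "?G' \<in> shift i j A" using S G'K cG' by auto
          then show ?thesis using sG' bk c GK by auto
        qed
      qed
    next
      case 3
      let ?H = "G - {j} \<union> {i}"
      have sG: "G \<in> shift i j A \<longleftrightarrow> (G \<in> A \<and> ?H \<in> A)" using shift_mem_j[OF ij 3] .
      have HK: "?H \<in> ?K"
      proof -
        have "?H \<subseteq> {1..M}" using GM(1) iM by auto
        moreover have "card (?H) = L" by (rule trans[OF card_swap[OF fG 3(1) 3(2)] GM(2)])
        ultimately show ?thesis unfolding k_subsets_def by blast
      qed
      have cH: "card (?H \<inter> T) = card (G \<inter> T) + 1"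
      proof -
        have eqs4: "?H \<inter> T = insert i (G \<inter> T)" using jT iT by auto
        show ?thesis unfolding eqs4 using 3 fG by simp
      qed
      have sH: "?H \<in> shift i j A \<longleftrightarrow> (?H \<in> A \<or> ?H - {i} \<union> {j} \<in> A)"
        by (rule shift_mem_i) (use ij 3 in auto)
      have bk: "?H - {i} \<union> {j} = G" using 3 by auto
      consider "card (G \<inter> T) = t + r - 1" | "card (G \<inter> T) \<ge> t + r" | "card (G \<inter> T) < t + r - 1" by linarith
      then show ?thesis
      proof cases
        case 1
        have bdC: "bd M L i j T (t+r-1) (G - {j})"
        proof -
          have "(G - {j}) \<inter> T = G \<inter> T" using jT by auto
          moreover have "G - {j} \<subseteq> {1..M} - {i,j}" using GM 3 by auto
          moreover have "card (G - {j}) = L - 1" using GM 3 fG by simp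
          ultimately show ?thesis unfolding bd_def using 1 by simp
        qed
        then have "insert i (G - {j}) \<in> A" using allI by blast
        then have "insert j (G - {j}) \<notin> A" using xor bdC by blast
        moreover have "\<not> t + r \<le> t + r - 1" using tr by arith
        ultimately show ?thesis using 3 1 by (simp add: insert_absorb)
      next
        case 2
        then show ?thesis using sG S GK by auto
      next
        case c: 3
        then have "?H \<notin> shift i j A" using S cH by auto
        then show ?thesis using sH bk c by auto
      qed
    qed
  qed
qed


lemma famJ:
  fixes A :: "nat set set"
  assumes AK: "A \<subseteq> k_subsets {1..M} L"
    and S: "shift i j A = {G \<in> k_subsets {1..M} L. t + r \<le> card (G \<inter> T)}"
    and iT: "i \<in> T" and jT: "j \<notin> T" and fT: "finite T" and iM: "i \<in> {1..M}" and jM: "j \<in> {1..M}"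
    and ij: "i \<noteq> j"
    and tr: "t + r \<ge> 1"
    and xor: "\<forall>C. bd M L i j T (t+r-1) C \<longrightarrow> (insert i C \<in> A \<longleftrightarrow> insert j C \<notin> A)"
    and allJ: "\<forall>C. bd M L i j T (t+r-1) C \<longrightarrow> insert j C \<in> A"
  shows "A = {G \<in> k_subsets {1..M} L. t + r \<le> card (G \<inter> (T - {i} \<union> {j}))}"
proof (rule set_eqI)
  fix G
  let ?K = "k_subsets {1..M} L"
  let ?T' = "T - {i} \<union> {j}"
  show "G \<in> A \<longleftrightarrow> G \<in> {G \<in> ?K. t + r \<le> card (G \<inter> ?T')}"
  proof (cases "G \<in> ?K")
    case False
    then show ?thesis using AK by auto
  next
    case GK: True
    have fG: "finite G" using ks_finite[OF GK] .
    have GM: "G \<subseteq> {1..M}" "card G = L" using GK unfolding k_subsets_def by auto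
    consider "(i \<in> G) = (j \<in> G)" | "i \<in> G" "j \<notin> G" | "j \<in> G" "i \<notin> G" by blast
    then show ?thesis
    proof cases
      case 1
      have "card (G \<inter> ?T') = card (G \<inter> T)"
      proof (cases "i \<in> G")
        case True
        then have eqs5: "G \<inter> ?T' = G \<inter> T - {i} \<union> {j}" using 1 by auto
        show ?thesis unfolding eqs5 using True 1 iT jT fG card_swap[of "G \<inter> T" i j] by simp
      next
        case False
        then have eqs6: "G \<inter> ?T' = G \<inter> T" using 1 by auto
        show ?thesis unfolding eqs6 by simp
      qed
      then show ?thesis using shift_mem_same[OF ij 1, of A] S GK by auto
    next
      case 2
      let ?G' = "G - {i} \<union> {j}"
      have sG: "G \<in> shift i j A \<longleftrightarrow> (G \<in> A \<or> ?G' \<in> A)" using shift_mem_i[OF ij 2] .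
      have G'K: "?G' \<in> ?K"
      proof -
        have "?G' \<subseteq> {1..M}" using GM(1) jM by auto
        moreover have "card (?G') = L" by (rule trans[OF card_swap[OF fG 2(1) 2(2)] GM(2)])
        ultimately show ?thesis unfolding k_subsets_def by blast
      qed
      have cG': "card (?G' \<inter> T) = card (G \<inter> T) - 1"
      proof -
        have eqs7: "?G' \<inter> T = G \<inter> T - {i}" using jT by auto
        show ?thesis unfolding eqs7 using 2 iT fG by (simp add: card_Diff_singleton_if)
      qed
      have cT': "card (G \<inter> ?T') = card (G \<inter> T) - 1"
      proof -
        have eqs8: "G \<inter> ?T' = G \<inter> T - {i}" using 2 by auto
        show ?thesis unfolding eqs8 using 2 iT fG by (simp add: card_Diff_singleton_if)
      qed
      have sG': "?G' \<in> shift i j A \<longleftrightarrow> (?G' \<in> A \<and> ?G' - {j} \<union> {i} \<in> A)"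
        by (rule shift_mem_j) (use ij 2 in auto)
      have bk: "?G' - {j} \<union> {i} = G" using 2 by auto
      consider "card (G \<inter> T) = t + r" | "card (G \<inter> T) > t + r" | "card (G \<inter> T) < t + r" by linarith
      then show ?thesis
      proof cases
        case 1
        have bdC: "bd M L i j T (t+r-1) (G - {i})"
        proof -
          have "(G - {i}) \<inter> T = G \<inter> T - {i}" by auto
          then have "card ((G - {i}) \<inter> T) = t + r - 1" using 1 2 iT fG by (simp add: card_Diff_singleton_if)
          moreover have "G - {i} \<subseteq> {1..M} - {i,j}" using GM 2 by auto
          moreover have "card (G - {i}) = L - 1" using GM 2 fG by simp
          ultimately show ?thesis unfolding bd_def by blast
        qed
        then have "insert j (G - {i}) \<in> A" using allJ by blast
        then have "insert i (G - {i}) \<notin> A" using xor bdC by blast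
        moreover have "\<not> t + r \<le> t + r - 1" using tr by arith
        ultimately show ?thesis using 2 1 cT' by (simp add: insert_absorb)
      next
        case 3
        then show ?thesis using sG S GK cT' by auto
      next
        case c: 2
        then have "?G' \<in> shift i j A" using S G'K cG' by auto
        then show ?thesis using sG' bk c GK cT' by auto
      qed
    next
      case 3
      let ?H = "G - {j} \<union> {i}"
      have sG: "G \<in> shift i j A \<longleftrightarrow> (G \<in> A \<and> ?H \<in> A)" using shift_mem_j[OF ij 3] .
      have HK: "?H \<in> ?K"
      proof -
        have "?H \<subseteq> {1..M}" using GM(1) iM by auto
        moreover have "card (?H) = L" by (rule trans[OF card_swap[OF fG 3(1) 3(2)] GM(2)])
        ultimately show ?thesis unfolding k_subsets_def by blast
      qed
      have cH: "card (?H \<inter> T) = card (G \<inter> T) + 1"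
      proof -
        have eqs10: "?H \<inter> T = insert i (G \<inter> T)" using jT iT by auto
        show ?thesis unfolding eqs10 using 3 fG by simp
      qed
      have cT': "card (G \<inter> ?T') = card (G \<inter> T) + 1"
      proof -
        have eqs11: "G \<inter> ?T' = insert j (G \<inter> T)" using 3 by auto
        show ?thesis unfolding eqs11 using jT fG by simp
      qed
      have sH: "?H \<in> shift i j A \<longleftrightarrow> (?H \<in> A \<or> ?H - {i} \<union> {j} \<in> A)"
        by (rule shift_mem_i) (use ij 3 in auto)
      have bk: "?H - {i} \<union> {j} = G" using 3 by auto
      consider "card (G \<inter> T) = t + r - 1" | "card (G \<inter> T) \<ge> t + r" | "card (G \<inter> T) < t + r - 1" by linarith
      then show ?thesis
      proof cases
        case 1
        have bdC: "bd M L i j T (t+r-1) (G - {j})"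
        proof -
          have "(G - {j}) \<inter> T = G \<inter> T" using jT by auto
          moreover have "G - {j} \<subseteq> {1..M} - {i,j}" using GM 3 by auto
          moreover have "card (G - {j}) = L - 1" using GM 3 fG by simp
          ultimately show ?thesis unfolding bd_def using 1 by simp
        qed
        then have "insert j (G - {j}) \<in> A" using allJ by blast
        then show ?thesis using 3 1 tr cT' GK by (simp add: insert_absorb)
      next
        case 2
        then show ?thesis using sG S GK cT' by auto
      next
        case c: 3
        then have "?H \<notin> shift i j A" using S cH by auto
        then show ?thesis using sH bk c cT' by auto
      qed
    qed
  qed
qed


lemma xorL:
  fixes A :: "nat set set"
  assumes AK: "A \<subseteq> k_subsets {1..M} L"
    and S: "shift i j A = {G \<in> k_subsets {1..M} L. t + r \<le> card (G \<inter> T)}"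
    and iT: "i \<in> T" and jT: "j \<notin> T" and fT: "finite T" and iM: "i \<in> {1..M}" and ij: "i \<noteq> j"
    and tr: "t + r \<ge> 1" and L1: "L \<ge> 1"
  shows "\<forall>C. bd M L i j T (t+r-1) C \<longrightarrow> (insert i C \<in> A \<longleftrightarrow> insert j C \<notin> A)"
proof (intro allI impI)
  fix C assume bC: "bd M L i j T (t+r-1) C"
  have CM: "C \<subseteq> {1..M} - {i,j}" "card C = L - 1" "card (C \<inter> T) = t + r - 1"
    using bC unfolding bd_def by auto
  have fC: "finite C" using bd_fin[OF bC] .
  let ?G = "insert i C"
  have iC: "i \<notin> C" "j \<notin> C" using CM by auto
  have GK: "?G \<in> k_subsets {1..M} L" using CM iM fC L1 iC unfolding k_subsets_def by auto
  have "?G \<inter> T = insert i (C \<inter> T)" using iT by auto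
  then have "card (?G \<inter> T) = t + r" using CM fC tr iC by auto
  then have GS: "?G \<in> shift i j A" using S GK by auto
  have iG: "i \<in> ?G" "j \<notin> ?G" using CM ij by auto
  have e1: "?G - {i} \<union> {j} = insert j C" using CM by auto
  have or: "?G \<in> A \<or> insert j C \<in> A" using shift_mem_i[OF ij iG, of A] GS e1 by simp
  have "\<not> (?G \<in> A \<and> insert j C \<in> A)"
  proof (cases "j \<in> {1..M}")
    case False
    then show ?thesis using AK unfolding k_subsets_def by auto
  next
    case True
    have G'K: "insert j C \<in> k_subsets {1..M} L" using CM True fC L1 iC unfolding k_subsets_def by auto
    have "insert j C \<inter> T = C \<inter> T" using jT by auto
    then have "insert j C \<notin> shift i j A" using S CM(3) tr by auto
    moreover have "insert j C - {j} \<union> {i} = ?G" using CM by auto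
    ultimately show ?thesis using shift_mem_j[OF ij, of "insert j C" A] CM iC ij by auto
  qed
  then show "insert i C \<in> A \<longleftrightarrow> insert j C \<notin> A" using or by blast
qed

lemma sameL:
  fixes A :: "nat set set"
  assumes AK: "A \<subseteq> k_subsets {1..M} L"
    and S: "shift i j A = {G \<in> k_subsets {1..M} L. t + r \<le> card (G \<inter> T)}"
    and iTj: "(i \<in> T) = (j \<in> T)" and fT: "finite T" and i1: "1 \<le> i" and ij: "i < j"
  shows "A = {G \<in> k_subsets {1..M} L. t + r \<le> card (G \<inter> T)}"
proof (rule set_eqI)
  fix G
  let ?K = "k_subsets {1..M} L"
  have ij': "i \<noteq> j" using ij by simp
  show "G \<in> A \<longleftrightarrow> G \<in> {G \<in> ?K. t + r \<le> card (G \<inter> T)}"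
  proof (cases "G \<in> ?K")
    case False
    then show ?thesis using AK by auto
  next
    case GK: True
    have fG: "finite G" using ks_finite[OF GK] .
    have GM: "G \<subseteq> {1..M}" "card G = L" using GK unfolding k_subsets_def by auto
    consider "(i \<in> G) = (j \<in> G)" | "i \<in> G" "j \<notin> G" | "j \<in> G" "i \<notin> G" by blast
    then show ?thesis
    proof cases
      case 1
      then show ?thesis using shift_mem_same[OF ij' 1, of A] S GK by auto
    next
      case 2
      let ?G' = "G - {i} \<union> {j}"
      have sG: "G \<in> shift i j A \<longleftrightarrow> (G \<in> A \<or> ?G' \<in> A)" using shift_mem_i[OF ij' 2] .
      show ?thesis
      proof (cases "j \<in> {1..M}")
        case False
        then have "?G' \<notin> A" using AK unfolding k_subsets_def by auto
        then show ?thesis using sG S GK by auto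
      next
        case jM: True
        have G'K: "?G' \<in> ?K"
        proof -
          have "?G' \<subseteq> {1..M}" using GM(1) jM by auto
          moreover have "card (?G') = L" by (rule trans[OF card_swap[OF fG 2(1) 2(2)] GM(2)])
          ultimately show ?thesis unfolding k_subsets_def by blast
        qed
        have cG': "card (?G' \<inter> T) = card (G \<inter> T)"
        proof (cases "i \<in> T")
          case True
          then have eqs12: "?G' \<inter> T = G \<inter> T - {i} \<union> {j}" using iTj by auto
          show ?thesis unfolding eqs12 using card_swap[of "G \<inter> T" i j] 2 True iTj fG by simp
        next
          case False
          then have eqs13: "?G' \<inter> T = G \<inter> T" using iTj by auto
          show ?thesis unfolding eqs13 by simp
        qed
        have sG': "?G' \<in> shift i j A \<longleftrightarrow> (?G' \<in> A \<and> ?G' - {j} \<union> {i} \<in> A)"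
          by (rule shift_mem_j) (use ij' 2 in auto)
        have bk: "?G' - {j} \<union> {i} = G" using 2 by auto
        have "G \<in> shift i j A \<longleftrightarrow> ?G' \<in> shift i j A" using S GK G'K cG' by auto
        then show ?thesis using sG sG' bk S GK by auto
      qed
    next
      case 3
      let ?H = "G - {j} \<union> {i}"
      have iM: "i \<in> {1..M}" using 3 GM i1 ij by auto
      have sG: "G \<in> shift i j A \<longleftrightarrow> (G \<in> A \<and> ?H \<in> A)" using shift_mem_j[OF ij' 3] .
      have HK: "?H \<in> ?K"
      proof -
        have "?H \<subseteq> {1..M}" using GM(1) iM by auto
        moreover have "card (?H) = L" by (rule trans[OF card_swap[OF fG 3(1) 3(2)] GM(2)])
        ultimately show ?thesis unfolding k_subsets_def by blast
      qed
      have cH: "card (?H \<inter> T) = card (G \<inter> T)"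
      proof (cases "i \<in> T")
        case True
        then have eqs14: "?H \<inter> T = G \<inter> T - {j} \<union> {i}" using iTj by auto
        show ?thesis unfolding eqs14 using card_swap[of "G \<inter> T" j i] 3 True iTj fG by simp
      next
        case False
        then have eqs15: "?H \<inter> T = G \<inter> T" using iTj by auto
        show ?thesis unfolding eqs15 by simp
      qed
      have sH: "?H \<in> shift i j A \<longleftrightarrow> (?H \<in> A \<or> ?H - {i} \<union> {j} \<in> A)"
        by (rule shift_mem_i) (use ij' 3 in auto)
      have bk: "?H - {i} \<union> {j} = G" using 3 by auto
      have "G \<in> shift i j A \<longleftrightarrow> ?H \<in> shift i j A" using S GK HK cH by auto
      then show ?thesis using sG sH bk S GK by auto
    qed
  qed
qed

lemma contraL:
  fixes A :: "nat set set"
  assumes AK: "A \<subseteq> k_subsets {1..M} L"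
    and S: "shift i j A = {G \<in> k_subsets {1..M} L. t + r \<le> card (G \<inter> T)}"
    and iT: "i \<notin> T" and jT: "j \<in> T" and fT: "finite T" and TM: "T \<subseteq> {1..M}"
    and cT: "card T = t + 2*r" and iM: "i \<in> {1..M}" and ij: "i \<noteq> j"
    and tr: "t + r \<ge> 1" and L: "L \<ge> t + r" and room: "L + r + 1 \<le> M"
  shows False
proof -
  have "t + r - 1 \<le> card (T - {j})" using cT jT fT by simp
  then obtain W where W: "W \<subseteq> T - {j}" "card W = t + r - 1" "finite W"
    using obtain_subset_with_card_n by blast
  have "card (insert i T) = t + 2*r + 1" using cT iT fT by simp
  moreover have "card ({1..M} - insert i T) = M - card (insert i T)"
    using TM iM fT by (simp add: card_Diff_subset)
  ultimately have "L - (t + r) \<le> card ({1..M} - insert i T)" using room by simp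
  then obtain Ou where Ou: "Ou \<subseteq> {1..M} - insert i T" "card Ou = L - (t + r)" "finite Ou"
    using obtain_subset_with_card_n by blast
  let ?G = "insert j W \<union> Ou"
  have jW: "j \<notin> W" using W by auto
  have cjW: "card (insert j W) = t + r" using W jW tr by simp
  have disj: "insert j W \<inter> Ou = {}" using W Ou jT by auto
  have cG: "card ?G = L" using card_Un_disjoint[OF _ Ou(3) disj] W cjW Ou(2) L by simp
  have GK: "?G \<in> k_subsets {1..M} L" using cG W Ou TM jT unfolding k_subsets_def by auto
  have GT: "?G \<inter> T = insert j W" using W Ou jT by auto
  then have GS: "?G \<in> shift i j A" using S GK cjW by auto
  have jG: "j \<in> ?G" "i \<notin> ?G" using W Ou iT jT ij by auto
  have HA: "?G - {j} \<union> {i} \<in> A" using shift_mem_j[OF ij jG, of A] GS by simp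
  have "?G - {j} \<union> {i} \<in> shift i j A"
    using shift_mem_i[OF ij, of "?G - {j} \<union> {i}" A] HA ij by auto
  moreover have "(?G - {j} \<union> {i}) \<inter> T = W" using W Ou iT jW by auto
  ultimately show False using S W(2) tr by auto
qed


lemma room_card:
  assumes "finite E" "finite T"
  shows "N - card (T \<union> insert j E) \<le> card ({1..N} - T - {j} - E)"
proof -
  have "{1..N} - T - {j} - E = {1..N} - (T \<union> insert j E)" by auto
  moreover have "card ({1..N}::nat set) - card (T \<union> insert j E) \<le> card ({1..N} - (T \<union> insert j E))"
    by (rule diff_card_le_card_Diff) (use assms in auto)
  ultimately show ?thesis by simp
qed


theorem theorem4p5:
  fixes m n k l t r i j :: nat and \<A> \<B> :: "nat set set" and T :: "nat set"
  assumes "m > 0" "n > 0" "k > 0" "l > 0" "t > 0" "r > 0"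
    and "t \<ge> 2" and "k \<ge> l" and "l \<ge> t + r"
    and "min m n \<ge> k + l - t + 2"
    and "i \<in> {1..max m n}" and "j \<in> {1..max m n}" and "i < j"
    and "\<A> \<subseteq> k_subsets {1..n} k" and "\<B> \<subseteq> k_subsets {1..m} l"
    and "cross_t_intersecting \<A> \<B> t"
    and "T \<subset> {1..min m n}" and "card T = t + 2 * r"
    and "shift i j \<A> = {A \<in> k_subsets {1..n} k. card (A \<inter> T) \<ge> t + r}"
    and "shift i j \<B> = {B \<in> k_subsets {1..m} l. card (B \<inter> T) \<ge> t + r}"
  shows "\<exists>T'. T' \<subset> {1..min m n} \<and> card T' = t + 2 * r \<and>
           \<A> = {A \<in> k_subsets {1..n} k. card (A \<inter> T') \<ge> t + r} \<and>
           \<B> = {B \<in> k_subsets {1..m} l. card (B \<inter> T') \<ge> t + r}"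
proof -
  define N where "N = min m n"
  note a = assms
  have TN: "T \<subseteq> {1..N}" and TN': "T \<noteq> {1..N}" using a(17) unfolding N_def by auto
  have fT: "finite T" using TN by (rule finite_subset) simp
  have Nm: "N \<le> m" and Nn: "N \<le> n" unfolding N_def by auto
  have NN: "k + l + 2 \<le> N + t" using a(10) a(9) unfolding N_def by linarith
  have kk: "k \<ge> t + r" using a(8) a(9) by linarith
  have i1: "1 \<le> i" using a(11) by simp
  have ij: "i \<noteq> j" using a(13) by simp
  have tr: "t + r \<ge> 1" using a(5) by simp
  have cross: "\<forall>X\<in>\<A>. \<forall>Y\<in>\<B>. t \<le> card (X \<inter> Y)" using a(16) unfolding cross_t_intersecting_def by blast
  have cross': "\<forall>X\<in>\<B>. \<forall>Y\<in>\<A>. t \<le> card (X \<inter> Y)" using cross by (metis Int_commute)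
  consider "(i \<in> T) = (j \<in> T)" | "i \<notin> T" "j \<in> T" | "i \<in> T" "j \<notin> T" by blast
  then show ?thesis
  proof cases
    case 1
    have "\<A> = {A \<in> k_subsets {1..n} k. t + r \<le> card (A \<inter> T)}"
      by (rule sameL[OF a(14) a(19) 1 fT i1 a(13)])
    moreover have "\<B> = {B \<in> k_subsets {1..m} l. t + r \<le> card (B \<inter> T)}"
      by (rule sameL[OF a(15) a(20) 1 fT i1 a(13)])
    ultimately show ?thesis using a(17) a(18) by blast
  next
    case 2
    have "False"
      by (rule contraL[OF a(14) a(19) 2 fT _ a(18) _ ij tr kk])
        (use TN Nn 2 a(13) NN a(9) i1 in auto)
    then show ?thesis ..
  next
    case 3
    have iT: "i \<in> T" and jT: "j \<notin> T" using 3 by auto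
    have t2: "t \<ge> 2" using a(7) .
    have iN: "i \<in> {1..n}" "i \<in> {1..m}" using iT TN Nn Nm by auto
    have xorA: "\<forall>C. bd n k i j T (t+r-1) C \<longrightarrow> (insert i C \<in> \<A> \<longleftrightarrow> insert j C \<notin> \<A>)"
      by (rule xorL[OF a(14) a(19) iT jT fT iN(1) ij tr]) (use a(3) in simp)
    have xorB: "\<forall>D. bd m l i j T (t+r-1) D \<longrightarrow> (insert i D \<in> \<B> \<longleftrightarrow> insert j D \<notin> \<B>)"
      by (rule xorL[OF a(15) a(20) iT jT fT iN(2) ij tr]) (use a(4) in simp)
    have constA: "\<And>C C'. bd n k i j T (t+r-1) C \<Longrightarrow> bd n k i j T (t+r-1) C' \<Longrightarrow>
         (insert i C \<in> \<A>) = (insert i C' \<in> \<A>)"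
      using const[OF fT iT jT TN Nm Nn a(18) t2 kk a(9) NN ij cross xorA xorB] by blast
    have NN': "l + k + 2 \<le> N + t" using NN by simp
    have constB: "\<And>C C'. bd m l i j T (t+r-1) C \<Longrightarrow> bd m l i j T (t+r-1) C' \<Longrightarrow>
         (insert i C \<in> \<B>) = (insert i C' \<in> \<B>)"
      using const[OF fT iT jT TN Nn Nm a(18) t2 a(9) kk NN' ij cross' xorB xorA] by blast
    have t1: "1 \<le> t" using t2 by simp
    have cTi: "card (T - {i}) = t + 2*r - 1" using iT fT a(18) by simp
    have W0: "T - {i} \<subseteq> T - {i}" "r \<le> card (T - {i})" using cTi t2 by auto
    have room0: "k - (t + r) \<le> card ({1..N} - T - {j} - {})"
    proof -
      have "card (T \<union> insert j {}) \<le> t + 2*r + 1" using fT a(18) by (simp add: card_insert_if)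
      moreover have "N - card (T \<union> insert j {}) \<le> card ({1..N} - T - {j} - {})"
        by (rule room_card) (use fT in auto)
      ultimately show ?thesis using NN a(9) by linarith
    qed
    obtain C0 where C0: "bd n k i j T (t+r-1) C0"
    proof -
      from mkD[OF fT iT jT TN Nn a(18) W0 kk t1 room0] obtain X where "bd n k i j T (t+r-1) X" .
      then show ?thesis using that by blast
    qed
    have fC0: "finite C0" using bd_fin[OF C0] .
    have iC0: "i \<notin> C0" "j \<notin> C0" using C0 unfolding bd_def by auto
    have cC0: "card C0 = k - 1" "card (C0 \<inter> T) = t + r - 1" using C0 unfolding bd_def by auto
    have W1: "C0 \<inter> T \<subseteq> T - {i}" "r \<le> card (C0 \<inter> T)" using iC0 cC0 t2 by auto
    have room1: "l - (t + r) \<le> card ({1..N} - T - {j} - C0)"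
    proof -
      have cCT: "card (C0 - T) = k - t - r"
      proof -
        have "card (C0 - T) = card C0 - card (C0 \<inter> T)" using fC0 by (simp add: card_Diff_subset_Int)
        then show ?thesis using cC0 kk t2 by simp
      qed
      have "T \<union> insert j C0 = insert j (T \<union> (C0 - T))" by auto
      then have h1: "card (T \<union> insert j C0) \<le> card (T \<union> (C0 - T)) + 1"
        using fT fC0 by (simp add: card_insert_if)
      have h2: "card (T \<union> (C0 - T)) \<le> card T + card (C0 - T)" by (rule card_Un_le)
      have "card (T \<union> insert j C0) \<le> k + r + 1" using h1 h2 cCT a(18) kk by linarith
      moreover have "N - card (T \<union> insert j C0) \<le> card ({1..N} - T - {j} - C0)"
        by (rule room_card) (use fT fC0 in auto)
      ultimately show ?thesis using NN kk by linarith
    qed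
    obtain D0 where D0: "bd m l i j T (t+r-1) D0"
      "\<forall>C. finite C \<longrightarrow> C \<inter> T \<subseteq> T - {i} \<longrightarrow> card (C \<inter> T) = t+r-1 \<longrightarrow> C0 \<inter> T \<subseteq> C \<longrightarrow> C - T \<subseteq> C0 \<longrightarrow> card (C \<inter> D0) < t"
    proof -
      from mkD[OF fT iT jT TN Nm a(18) W1 a(9) t1 room1] obtain X where
        "bd m l i j T (t+r-1) X"
        "\<forall>C. finite C \<longrightarrow> C \<inter> T \<subseteq> T - {i} \<longrightarrow> card (C \<inter> T) = t+r-1 \<longrightarrow> C0 \<inter> T \<subseteq> C \<longrightarrow> C - T \<subseteq> C0 \<longrightarrow> card (C \<inter> X) < t"
        .
      then show ?thesis using that by blast
    qed
    have d0: "card (C0 \<inter> D0) < t"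
    proof (rule D0(2)[rule_format])
      show "finite C0" by (rule fC0)
      show "C0 \<inter> T \<subseteq> T - {i}" using iC0 by blast
      show "card (C0 \<inter> T) = t + r - 1" by (rule cC0(2))
      show "C0 \<inter> T \<subseteq> C0" by blast
      show "C0 - T \<subseteq> C0" by blast
    qed
    have iD0: "i \<notin> D0" "j \<notin> D0" using D0(1) unfolding bd_def by auto
    have pq: "insert i C0 \<in> \<A> \<longleftrightarrow> insert i D0 \<in> \<B>"
      by (rule compat[OF cross ij iC0 iD0 d0]) (use xorA xorB C0 D0(1) in auto)
    show ?thesis
    proof (cases "insert i C0 \<in> \<A>")
      case True
      have allA: "\<forall>C. bd n k i j T (t+r-1) C \<longrightarrow> insert i C \<in> \<A>" using constA C0 True by blast
      have allB: "\<forall>C. bd m l i j T (t+r-1) C \<longrightarrow> insert i C \<in> \<B>" using constB D0(1) True pq by blast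
      have "\<A> = {A \<in> k_subsets {1..n} k. t + r \<le> card (A \<inter> T)}"
        by (rule famI[OF a(14) a(19) iT jT fT iN(1) ij tr xorA allA])
      moreover have "\<B> = {B \<in> k_subsets {1..m} l. t + r \<le> card (B \<inter> T)}"
        by (rule famI[OF a(15) a(20) iT jT fT iN(2) ij tr xorB allB])
      ultimately show ?thesis using a(17) a(18) by blast
    next
      case False
      have allA: "\<forall>C. bd n k i j T (t+r-1) C \<longrightarrow> insert j C \<in> \<A>" using constA C0 False xorA by blast
      have allB: "\<forall>C. bd m l i j T (t+r-1) C \<longrightarrow> insert j C \<in> \<B>" using constB D0(1) False pq xorB by blast
      have jn: "j \<in> {1..n}" using allA C0 a(14) unfolding k_subsets_def by auto
      have jm: "j \<in> {1..m}" using allB D0(1) a(15) unfolding k_subsets_def by auto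
      have "\<A> = {A \<in> k_subsets {1..n} k. t + r \<le> card (A \<inter> (T - {i} \<union> {j}))}"
        by (rule famJ[OF a(14) a(19) iT jT fT iN(1) jn ij tr xorA allA])
      moreover have "\<B> = {B \<in> k_subsets {1..m} l. t + r \<le> card (B \<inter> (T - {i} \<union> {j}))}"
        by (rule famJ[OF a(15) a(20) iT jT fT iN(2) jm ij tr xorB allB])
      moreover have "card (T - {i} \<union> {j}) = t + 2 * r" using card_swap[OF fT iT jT] a(18) by simp
      moreover have "T - {i} \<union> {j} \<subset> {1..min m n}"
      proof -
        have sub: "T - {i} \<union> {j} \<subseteq> {1..N}" using TN jn jm unfolding N_def by auto
        have "T \<subset> {1..N}" using TN TN' by blast
        then have "card T < card {1..N}" using psubset_card_mono[of "{1..N}" T] by simp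
        then have "card (T - {i} \<union> {j}) < card {1..N}" using card_swap[OF fT iT jT] by simp
        then show ?thesis using sub unfolding N_def by auto
      qed
      ultimately show ?thesis by blast
    qed
  qed
qed

end
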